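(* Fix $Q_1>Q>0$ and let $\Omega_{Q_1}=\{(x,y): x\log x\le y\le x\log x+Q_1x\}$. Then for every interval $I$ and every weight $w$ on $I$ with $[w]_{RH_1,I}<Q$ there are two intervals $I^-$ and $I^+$ with $I=I^-\cup I^+$ such that, setting $x^{\pm}=\big(\langle w\rangle_{I^\pm},\langle w\log w\rangle_{I^\pm}\big)$, the closed line segment $[x^-,x^+]$ is contained in $\Omega_{Q_1}$. Moreover the parameters $\alpha^\pm=|I^\pm|/|I|$ can be taken separated from $0$ and $1$ uniformly with respect to $w$.
   Context: $\langle f\rangle_J=\frac1{|J|}\int_J f$. For a weight $w$ (a.e. positive, locally integrable) on an interval $I$, $[w]_{RH_1,I}=\sup_{J\subset I}\Big\langle \frac{w}{\langle w\rangle_J}\log\frac{w}{\langle w\rangle_J}\Big\rangle_J$, supremum over subintervals $J$ of $I$. *)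

theory Defs
  imports "HOL-Analysis.Analysis"
begin

definition avg :: "real \<Rightarrow> real \<Rightarrow> (real \<Rightarrow> real) \<Rightarrow> real" where
  "avg a b f = (LINT x:{a..b}|lborel. f x) / (b - a)"

definition is_weight :: "real \<Rightarrow> real \<Rightarrow> (real \<Rightarrow> real) \<Rightarrow> bool" where
  "is_weight a b w \<longleftrightarrow> a < b \<and> set_integrable lborel {a..b} w \<and>
     (AE x in lborel. x \<in> {a..b} \<longrightarrow> w x > 0)"

definition rh1_char :: "real \<Rightarrow> real \<Rightarrow> (real \<Rightarrow> real) \<Rightarrow> ereal" where
  "rh1_char a b w = (SUP J \<in> {(c, d). a \<le> c \<and> c < d \<and> d \<le> b}.
     ereal (avg (fst J) (snd J)
       (\<lambda>x. w x / avg (fst J) (snd J) w * ln (w x / avg (fst J) (snd J) w))))"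

definition Omega :: "real \<Rightarrow> (real \<times> real) set" where
  "Omega Q1 = {(x, y). x * ln x \<le> y \<and> y \<le> x * ln x + Q1 * x}"

end

theory Submission imports Defs begin

lemma ln_ineq: assumes "0<(p::real)" "0<q" shows "p - q \<le> p * ln (p/q)"
proof -
  have "ln (q/p) \<le> q/p - 1" using assms by (intro ln_le_minus_one) auto
  hence "p * ln (q/p) \<le> p*(q/p - 1)" using assms by (intro mult_left_mono) auto
  also have "p*(q/p - 1) = q - p" using assms by (simp add: field_simps)
  finally have "p * ln (q/p) \<le> q - p" .
  moreover have "ln (q/p) = - ln (p/q)" using assms by (simp add: ln_div)
  ultimately show ?thesis by simp
qed

lemma pw1: assumes "0<(w::real)" "0<c" shows "w*(1 + ln c) - c \<le> w * ln w"
proof -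
  have "w - c \<le> w * ln (w/c)" by (rule ln_ineq) (use assms in auto)
  thus ?thesis using assms by (simp add: ln_div algebra_simps)
qed

lemma pw2: assumes "0<(w::real)" "0<c" shows "(\<tau>::real)*w \<le> w*ln w - w*(1+ln c) + c*exp \<tau>"
proof -
  have "ln (c*exp \<tau>/w) \<le> c*exp \<tau>/w - 1" using assms by (intro ln_le_minus_one) auto
  hence "w * ln (c*exp \<tau>/w) \<le> w*(c*exp \<tau>/w - 1)" using assms by (intro mult_left_mono) auto
  also have "w*(c*exp \<tau>/w - 1) = c*exp \<tau> - w" using assms by (simp add: field_simps)
  finally have 1: "w * ln (c*exp \<tau>/w) \<le> c*exp \<tau> - w" .
  have "ln (c*exp \<tau>/w) = ln c + \<tau> - ln w" using assms by (simp add: ln_div ln_mult)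
  with 1 have "w * (ln c + \<tau> - ln w) \<le> c*exp \<tau> - w" by simp
  thus ?thesis by (simp add: algebra_simps)
qed

lemma sic: "set_integrable lborel {p..q::real} (\<lambda>x. (\<gamma>::real))"
  by (rule borel_integrable_atLeastAtMost') auto

lemma lin_int:
  assumes "set_integrable lborel {p..q} (f::real\<Rightarrow>real)" "set_integrable lborel {p..q} g" "p \<le> (q::real)"
  shows "(LINT x:{p..q}|lborel. \<alpha> * f x + \<beta> * g x + \<gamma>) =
     \<alpha> * (LINT x:{p..q}|lborel. f x) + \<beta> * (LINT x:{p..q}|lborel. g x) + \<gamma> * (q - p)"
  using assms sic[of p q \<gamma>]
  by (simp add: set_integral_const assms)

lemma lin_int_i:
  assumes "set_integrable lborel {p..q} (f::real\<Rightarrow>real)" "set_integrable lborel {p..q} g"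
  shows "set_integrable lborel {p..q} (\<lambda>x. \<alpha> * f x + \<beta> * g x + \<gamma>)"
  using assms sic[of p q \<gamma>] by simp



lemma L_sub: assumes "set_integrable lborel {a..b} (f::real\<Rightarrow>real)" "a \<le> p" "q \<le> b"
  shows "set_integrable lborel {p..q} f"
  by (rule set_integrable_subset[OF assms(1)]) (use assms in auto)

lemma L_add: assumes "set_integrable lborel {a..b} (f::real\<Rightarrow>real)" "a \<le> p" "p \<le> c" "c \<le> q" "q \<le> b"
  shows "(LINT x:{p..q}|lborel. f x) = (LINT x:{p..c}|lborel. f x) + (LINT x:{c..q}|lborel. f x)"
proof -
  have i: "set_integrable lborel {p..q} f" "set_integrable lborel {p..c} f" "set_integrable lborel {c..q} f"
    using L_sub[OF assms(1)] assms by auto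
  have fi: "f integrable_on {p..q}" using set_borel_integral_eq_integral(1)[OF i(1)] .
  have "integral {p..c} f + integral {c..q} f = integral {p..q} f"
    by (rule Henstock_Kurzweil_Integration.integral_combine[OF _ _ fi]) (use assms in auto)
  thus ?thesis using set_borel_integral_eq_integral(2)[OF i(1)] set_borel_integral_eq_integral(2)[OF i(2)]
     set_borel_integral_eq_integral(2)[OF i(3)] by simp
qed

lemma L_cont: assumes "set_integrable lborel {a..b} (f::real\<Rightarrow>real)"
  shows "continuous_on {a..b} (\<lambda>s. (LINT x:{a..s}|lborel. f x))"
proof -
  have "f integrable_on {a..b}" using set_borel_integral_eq_integral(1)[OF assms] .
  hence "continuous_on {a..b} (\<lambda>s. integral {a..s} f)" by (rule indefinite_integral_continuous_1)
  moreover have "integral {a..s} f = (LINT x:{a..s}|lborel. f x)" if "s \<in> {a..b}" for s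
    using set_borel_integral_eq_integral(2)[OF L_sub[OF assms, of a s]] that by auto
  ultimately show ?thesis by (rule continuous_on_eq) 
qed

lemma L_mono: assumes "set_integrable lborel {p..q} (f::real\<Rightarrow>real)" "set_integrable lborel {p..q} g"
  "AE x in lborel. x \<in> {a..b} \<longrightarrow> 0 < w x" "a \<le> p" "q \<le> b"
  "\<And>x. 0 < w x \<Longrightarrow> f x \<le> g x"
  shows "(LINT x:{p..q}|lborel. f x) \<le> (LINT x:{p..q}|lborel. g x)"
proof (rule set_integral_mono_AE[OF assms(1,2)])
  show "AE x\<in>{p..q} in lborel. f x \<le> g x"
    using assms(3) by eventually_elim (use assms(4-) in auto)
qed

lemma L_pos: assumes "set_integrable lborel {p..q} (w::real\<Rightarrow>real)"
  "AE x in lborel. x \<in> {a..b} \<longrightarrow> 0 < w x" "a \<le> p" "q \<le> b" "p < q"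
  shows "0 < (LINT x:{p..q}|lborel. w x)"
proof -
  let ?g = "\<lambda>x. indicator {p..q} x *\<^sub>R w x"
  have ig: "integrable lborel ?g" using assms(1) unfolding set_integrable_def .
  have nn: "AE x in lborel. 0 \<le> ?g x"
    using assms(2) by eventually_elim (use assms(3-) in \<open>auto simp: indicator_def\<close>)
  have ge: "0 \<le> integral\<^sup>L lborel ?g" using nn by (simp add: integral_nonneg_AE)
  show ?thesis
  proof (rule ccontr)
    assume "\<not> ?thesis"
    hence "integral\<^sup>L lborel ?g = 0" using ge unfolding set_lebesgue_integral_def by simp
    hence "AE x in lborel. ?g x = 0" using integral_nonneg_eq_0_iff_AE[OF ig nn] by simp
    hence "AE x in lborel. x \<notin> {p..q}"
      using assms(2) by eventually_elim (use assms(3-) in \<open>auto simp: indicator_def\<close>)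
    hence "emeasure lborel {p..q} = 0"
      by (subst AE_iff_measurable[of "{p..q}" lborel "\<lambda>x. x \<notin> {p..q}", symmetric]) auto
    thus False using assms(5) by simp
  qed
qed



lemma seg:
  fixes x1 x2 y1 y2 X Q1 :: real
  assumes "0<x1" "0<x2" "0<X" "x1*ln x1 \<le> y1" "x2 * ln x2 \<le> y2"
    "y1 + X \<le> (Q1 + 1 + ln X)*x1" "y2 + X \<le> (Q1 + 1 + ln X)*x2"
  shows "closed_segment (x1,y1) (x2,y2) \<subseteq> Omega Q1"
proof
  fix z assume "z \<in> closed_segment (x1,y1) (x2,y2)"
  then obtain u where u: "0 \<le> u" "u \<le> 1" "z = (1-u) *\<^sub>R (x1,y1) + u *\<^sub>R (x2,y2)"
    unfolding closed_segment_def by auto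
  define xz where "xz = (1-u)*x1 + u*x2"
  define yz where "yz = (1-u)*y1 + u*y2"
  have z: "z = (xz,yz)" using u(3) by (simp add: xz_def yz_def)
  have xzp: "0 < xz" unfolding xz_def
  proof (cases "u = 0")
    case True then show "0 < (1-u)*x1 + u*x2" using assms by simp
  next
    case False then have "0 < u*x2" using u assms by simp
    moreover have "0 \<le> (1-u)*x1" using u assms by simp
    ultimately show "0 < (1-u)*x1 + u*x2" by simp
  qed
  have t1: "x1 - xz \<le> x1 * ln x1 - x1 * ln xz"
    using ln_ineq[OF assms(1) xzp] assms(1) xzp by (simp add: ln_div right_diff_distrib)
  have t2: "x2 - xz \<le> x2 * ln x2 - x2 * ln xz"
    using ln_ineq[OF assms(2) xzp] assms(2) xzp by (simp add: ln_div right_diff_distrib)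
  have a1: "(1-u)*(x1 - xz) \<le> (1-u)*(y1 - x1 * ln xz)"
    using t1 assms(4) u by (intro mult_left_mono) auto
  have a2: "u*(x2 - xz) \<le> u*(y2 - x2 * ln xz)"
    using t2 assms(5) u by (intro mult_left_mono) auto
  have "(1-u)*(x1 - xz) + u*(x2 - xz) = 0" unfolding xz_def by (simp add: algebra_simps)
  moreover have "(1-u)*(y1 - x1 * ln xz) + u*(y2 - x2 * ln xz) = yz - xz * ln xz"
    unfolding xz_def yz_def by (simp add: algebra_simps)
  ultimately have low: "xz * ln xz \<le> yz" using a1 a2 by linarith
  have b1: "(1-u)*(y1 + X) \<le> (1-u)*((Q1 + 1 + ln X)*x1)" using assms(6) u by (intro mult_left_mono) auto
  have b2: "u*(y2 + X) \<le> u*((Q1 + 1 + ln X)*x2)" using assms(7) u by (intro mult_left_mono) auto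
  have "(1-u)*(y1 + X) + u*(y2 + X) = yz + X" unfolding yz_def by (simp add: algebra_simps)
  moreover have "(1-u)*((Q1 + 1 + ln X)*x1) + u*((Q1 + 1 + ln X)*x2) = (Q1 + 1 + ln X)*xz"
    unfolding xz_def by (simp add: algebra_simps)
  ultimately have up1: "yz + X \<le> (Q1 + 1 + ln X)*xz" using b1 b2 by linarith
  have "xz*(1 + ln X) - X \<le> xz * ln xz" using pw1[OF xzp assms(3)] .
  hence up: "yz \<le> xz * ln xz + Q1 * xz" using up1 by (simp add: algebra_simps)
  show "z \<in> Omega Q1" unfolding z Omega_def using low up by simp
qed



lemma rh_val:
  fixes w :: "real \<Rightarrow> real" and X :: real
  assumes wi: "set_integrable lborel {a..b} w" and vi: "set_integrable lborel {a..b} (\<lambda>x. w x * ln (w x))"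
    and ae: "AE x in lborel. x \<in> {a..b} \<longrightarrow> 0 < w x" and ab: "a \<le> b" and X: "0 < X"
  shows "(LINT x:{a..b}|lborel. w x / X * ln (w x / X)) =
     (- ln X / X) * (LINT x:{a..b}|lborel. w x) + (1/X) * (LINT x:{a..b}|lborel. w x * ln (w x)) + 0 * (b - a)"
proof -
  have m: "(\<lambda>x. indicator {a..b} x *\<^sub>R w x) \<in> borel_measurable lborel"
    using wi unfolding set_integrable_def by (rule borel_measurable_integrable)
  have eq: "(\<lambda>x. indicator {a..b} x *\<^sub>R (w x / X * ln (w x / X))) =
      (\<lambda>x. (indicator {a..b} x *\<^sub>R w x) / X * ln ((indicator {a..b} x *\<^sub>R w x) / X))"
    by (rule ext) (simp add: indicator_def)
  have m1: "(\<lambda>x. indicator {a..b} x *\<^sub>R (w x / X * ln (w x / X))) \<in> borel_measurable lborel"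
    unfolding eq using m by measurable
  have i2: "set_integrable lborel {a..b} (\<lambda>x. (- ln X / X) * w x + (1/X) * (w x * ln (w x)) + 0)"
    by (rule lin_int_i[OF wi vi])
  have m2: "(\<lambda>x. indicator {a..b} x *\<^sub>R ((- ln X / X) * w x + (1/X) * (w x * ln (w x)) + 0)) \<in> borel_measurable lborel"
    using i2 unfolding set_integrable_def by (rule borel_measurable_integrable)
  have "(LINT x:{a..b}|lborel. w x / X * ln (w x / X)) =
        (LINT x:{a..b}|lborel. (- ln X / X) * w x + (1/X) * (w x * ln (w x)) + 0)"
    unfolding set_lebesgue_integral_def
  proof (rule integral_cong_AE[OF m1 m2])
    show "AE x in lborel. indicator {a..b} x *\<^sub>R (w x / X * ln (w x / X)) =
        indicator {a..b} x *\<^sub>R ((- ln X / X) * w x + (1/X) * (w x * ln (w x)) + 0)"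
      using ae
    proof eventually_elim
      case (elim x)
      show ?case
      proof (cases "x \<in> {a..b}")
        case True
        then have "0 < w x" using elim by auto
        then have "ln (w x / X) = ln (w x) - ln X" using X by (simp add: ln_div)
        then have e: "w x * ln (w x / X) = w x * ln (w x) - w x * ln X" by (simp add: right_diff_distrib)
        have "w x / X * ln (w x / X) = (w x * ln (w x / X)) / X" by simp
        also have "\<dots> = (- ln X / X) * w x + (1/X) * (w x * ln (w x)) + 0" unfolding e using X by (simp add: field_simps)
        finally show ?thesis using True by simp
      qed simp
    qed
  qed
  also have "\<dots> = (- ln X / X) * (LINT x:{a..b}|lborel. w x) + (1/X) * (LINT x:{a..b}|lborel. w x * ln (w x)) + 0 * (b - a)"
    by (rule lin_int[OF wi vi ab])
  finally show ?thesis .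
qed

lemma L_lin_mono:
  fixes w :: "real \<Rightarrow> real"
  assumes wi: "set_integrable lborel {a..b} w" and vi: "set_integrable lborel {a..b} (\<lambda>x. w x * ln (w x))"
    and ae: "AE x in lborel. x \<in> {a..b} \<longrightarrow> 0 < w x" and pq: "a \<le> p" "p \<le> q" "q \<le> b"
    and pw: "\<And>t::real. 0 < t \<Longrightarrow> \<alpha>1 * t + \<beta>1 * (t * ln t) + \<gamma>1 \<le> \<alpha>2 * t + \<beta>2 * (t * ln t) + \<gamma>2"
  shows "\<alpha>1 * (LINT x:{p..q}|lborel. w x) + \<beta>1 * (LINT x:{p..q}|lborel. w x * ln (w x)) + \<gamma>1 * (q - p)
       \<le> \<alpha>2 * (LINT x:{p..q}|lborel. w x) + \<beta>2 * (LINT x:{p..q}|lborel. w x * ln (w x)) + \<gamma>2 * (q - p)"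
proof -
  have wi': "set_integrable lborel {p..q} w" and vi': "set_integrable lborel {p..q} (\<lambda>x. w x * ln (w x))"
    using L_sub[OF wi] L_sub[OF vi] pq by auto
  have "(LINT x:{p..q}|lborel. \<alpha>1 * w x + \<beta>1 * (w x * ln (w x)) + \<gamma>1) \<le>
        (LINT x:{p..q}|lborel. \<alpha>2 * w x + \<beta>2 * (w x * ln (w x)) + \<gamma>2)"
    by (rule L_mono[OF lin_int_i[OF wi' vi'] lin_int_i[OF wi' vi'] ae]) (use pq pw in auto)
  thus ?thesis using lin_int[OF wi' vi' pq(2)] by simp
qed



lemma main_w:
  fixes Q Q1 \<tau> \<delta> a b :: real and w :: "real \<Rightarrow> real"
  assumes Q: "0 < Q" "Q < Q1" and tau: "0 < \<tau>" "\<tau> * (Q1 - Q) = 2*Q*Q1"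
    and del: "0 < \<delta>" "\<delta> < 1/2" "\<delta> * exp \<tau> = Q"
    and hw: "is_weight a b w" and vi: "set_integrable lborel {a..b} (\<lambda>x. w x * ln (w x))"
    and rh: "rh1_char a b w < ereal Q"
  shows "\<exists>c. a + \<delta> * (b - a) \<le> c \<and> c \<le> b - \<delta> * (b - a) \<and>
              closed_segment (avg a c w, avg a c (\<lambda>x. w x * ln (w x)))
                             (avg c b w, avg c b (\<lambda>x. w x * ln (w x)))
              \<subseteq> Omega Q1"
proof -
  have ab: "a < b" and wi: "set_integrable lborel {a..b} w" and ae: "AE x in lborel. x \<in> {a..b} \<longrightarrow> 0 < w x"
    using hw unfolding is_weight_def by auto
  define W where "W = (\<lambda>p q. LINT x:{p..q}|lborel. w x)"
  define Y where "Y = (\<lambda>p q. LINT x:{p..q}|lborel. w x * ln (w x))"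
  define L where "L = b - a"
  have Lp: "0 < L" using ab by (simp add: L_def)
  define X where "X = W a b / L"
  have Wab: "0 < W a b" unfolding W_def by (rule L_pos[OF wi ae]) (use ab in auto)
  have Xp: "0 < X" using Wab Lp by (simp add: X_def)
  have WLX: "W a b = L * X" using Lp by (simp add: X_def)
  have avgX: "avg a b w = X" by (simp add: avg_def X_def W_def L_def)
  have "ereal (avg a b (\<lambda>x. w x / avg a b w * ln (w x / avg a b w))) \<le> rh1_char a b w"
  proof -
    have "(a,b) \<in> {(c, d). a \<le> c \<and> c < d \<and> d \<le> b}" using ab by auto
    from SUP_upper[OF this, of "\<lambda>J. ereal (avg (fst J) (snd J)
       (\<lambda>x. w x / avg (fst J) (snd J) w * ln (w x / avg (fst J) (snd J) w)))"]
    show ?thesis unfolding rh1_char_def by simp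
  qed
  hence "ereal (avg a b (\<lambda>x. w x / avg a b w * ln (w x / avg a b w))) < ereal Q" using rh by (rule order.strict_trans1)
  hence "avg a b (\<lambda>x. w x / X * ln (w x / X)) < Q" unfolding avgX using ereal_less_eq(4) by (metis less_ereal.simps(1))
  hence "((- ln X / X) * W a b + (1/X) * Y a b + 0 * (b - a)) / L < Q"
    unfolding avg_def rh_val[OF wi vi ae less_imp_le[OF ab] Xp] W_def Y_def L_def .
  hence "(- ln X / X) * (L*X) + (1/X) * Y a b < Q * L" using Lp unfolding WLX by (simp add: field_simps)
  hence "- ln X * L + Y a b / X < Q * L" using Xp by (simp add: field_simps)
  hence "- ln X * L * X + Y a b < Q * L * X" using Xp by (simp add: field_simps)
  hence hI: "Y a b < L * X * (Q + ln X)" by (simp add: algebra_simps)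
  have I1: "(1 + ln c) * W p q - c * (q - p) \<le> Y p q" if "0 < c" "a \<le> p" "p \<le> q" "q \<le> b" for c p q
    using L_lin_mono[OF wi vi ae that(2-4), of "1 + ln c" 0 "-c" 0 1 0] pw1[OF _ that(1)]
    unfolding W_def Y_def by (simp add: algebra_simps)
  have I2: "\<tau> * W p q \<le> Y p q - (1 + ln X) * W p q + X * exp \<tau> * (q - p)" if "a \<le> p" "p \<le> q" "q \<le> b" for p q
    using L_lin_mono[OF wi vi ae that, of \<tau> 0 0 "-(1 + ln X)" 1 "X * exp \<tau>"] pw2[OF _ Xp, of _ \<tau>]
    unfolding W_def Y_def by (simp add: algebra_simps)
  have addW: "W p q = W p c + W c q" if "a \<le> p" "p \<le> c" "c \<le> q" "q \<le> b" for p c q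
    unfolding W_def by (rule L_add[OF wi that])
  have addY: "Y p q = Y p c + Y c q" if "a \<le> p" "p \<le> c" "c \<le> q" "q \<le> b" for p c q
    unfolding Y_def by (rule L_add[OF vi that])
  define K where "K = (\<lambda>s. Q1 * W a s - (Y a s - (1 + ln X) * W a s + X * (s - a)))"
  have Kcont: "continuous_on {a..b} K"
    unfolding K_def W_def Y_def by (intro continuous_intros L_cont[OF wi] L_cont[OF vi])
  have Kb: "L * X * (Q1 - Q) < K b"
  proof -
    have "K b = Q1*(L*X) - (Y a b - (1+ln X)*(L*X) + X*L)" using WLX unfolding K_def L_def by simp
    thus ?thesis using hI by (simp add: algebra_simps)
  qed
  have eps: "\<tau> * (L * X * (Q1 - Q)) = 2 * Q * (L*X) * Q1"
  proof -
    have "\<tau> * (L * X * (Q1 - Q)) = (L*X) * (\<tau> * (Q1 - Q))" by (simp add: algebra_simps)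
    also have "\<dots> = (L*X) * (2*Q*Q1)" using tau(2) by simp
    finally show ?thesis by (simp add: algebra_simps)
  qed
  have dQ: "L * X * \<delta> * exp \<tau> = L * X * Q" using del(3) by (simp add: algebra_simps)
  have dL: "0 < \<delta> * L" "\<delta> * L < L / 2" using del Lp by auto
  define f where "f = a + \<delta> * L"
  define e where "e = b - \<delta> * L"
  have fe: "a < f" "f < e" "e < b" using dL by (auto simp: f_def e_def L_def)
  have "\<tau> * W e b \<le> Y e b - (1 + ln X) * W e b + X * exp \<tau> * (b - e)" using I2[of e b] fe by simp
  moreover have "(1 + ln X) * W a e - X * (e - a) \<le> Y a e" using I1[OF Xp, of a e] fe by simp
  moreover have "W a b = W a e + W e b" "Y a b = Y a e + Y e b" using addW addY fe by auto
  moreover have "X * exp \<tau> * (b - e) = L * X * Q" using dQ by (simp add: e_def algebra_simps)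
  moreover have "X * (e - a) = L * X - X * \<delta> * L" by (simp add: e_def L_def algebra_simps)
  moreover have "0 < X * \<delta> * L" using Xp dL mult_pos_pos[OF Xp dL(1)] by (simp add: mult.assoc)
  ultimately have "\<tau> * W e b < 2 * Q * (L*X)" using hI WLX by (simp add: algebra_simps)
  hence "\<tau> * (Q1 * W e b) < \<tau> * (L * X * (Q1 - Q))" unfolding eps using Q
    by (simp add: algebra_simps)
  hence We: "Q1 * W e b < L * X * (Q1 - Q)" using tau(1) by simp
  have Ke: "0 < K e"
  proof -
    have "(1 + ln X) * W e b - X * (b - e) \<le> Y e b" using I1[OF Xp, of e b] fe by simp
    moreover have "W a b = W a e + W e b" "Y a b = Y a e + Y e b" using addW addY fe by auto
    ultimately show ?thesis using We Kb unfolding K_def by (simp add: algebra_simps)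
  qed
  have "\<tau> * W a f \<le> Y a f - (1 + ln X) * W a f + X * exp \<tau> * (f - a)" using I2[of a f] fe by simp
  moreover have "(1 + ln X) * W f b - X * (b - f) \<le> Y f b" using I1[OF Xp, of f b] fe by simp
  moreover have "W a b = W a f + W f b" "Y a b = Y a f + Y f b" using addW addY fe by auto
  moreover have "X * exp \<tau> * (f - a) = L * X * Q" using dQ by (simp add: f_def algebra_simps)
  moreover have "X * (b - f) = L * X - X * \<delta> * L" by (simp add: f_def L_def algebra_simps)
  moreover have "0 < X * \<delta> * L" using Xp dL mult_pos_pos[OF Xp dL(1)] by (simp add: mult.assoc)
  ultimately have "\<tau> * W a f < 2 * Q * (L*X)" using hI WLX by (simp add: algebra_simps)
  hence "\<tau> * (Q1 * W a f) < \<tau> * (L * X * (Q1 - Q))" unfolding eps using Q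
    by (simp add: algebra_simps)
  hence Wf: "Q1 * W a f < L * X * (Q1 - Q)" using tau(1) by simp
  have Kf: "K f < K b"
  proof -
    have "(1 + ln X) * W a f - X * (f - a) \<le> Y a f" using I1[OF Xp, of a f] fe by simp
    thus ?thesis using Wf Kb unfolding K_def by (simp add: algebra_simps)
  qed
  obtain s where s: "f \<le> s" "s \<le> e" "0 \<le> K s" "K s \<le> K b"
  proof (cases "0 \<le> K f")
    case True then show ?thesis using that[of f] fe Kf by auto
  next
    case False
    have "continuous_on {f..e} K" by (rule continuous_on_subset[OF Kcont]) (use fe in auto)
    then obtain s where "f \<le> s" "s \<le> e" "K s = 0" using IVT'[of K f 0 e] False Ke fe by auto
    moreover have "0 < L * X * (Q1 - Q)" using Lp Xp Q by simp
    ultimately show ?thesis using that[of s] Kb by auto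
  qed
  have sa: "a < s" "s < b" using s fe by auto
  define x1 where "x1 = W a s / (s - a)"
  define y1 where "y1 = Y a s / (s - a)"
  define x2 where "x2 = W s b / (b - s)"
  define y2 where "y2 = Y s b / (b - s)"
  have Was: "W a s = x1 * (s - a)" "Y a s = y1 * (s - a)" using sa by (simp_all add: x1_def y1_def)
  have Wsb: "W s b = x2 * (b - s)" "Y s b = y2 * (b - s)" using sa by (simp_all add: x2_def y2_def)
  have i1: "set_integrable lborel {a..s} w" by (rule L_sub[OF wi]) (use sa in auto)
  have i2: "set_integrable lborel {s..b} w" by (rule L_sub[OF wi]) (use sa in auto)
  have x1p: "0 < x1" unfolding x1_def W_def using L_pos[OF i1 ae] sa by simp
  have x2p: "0 < x2" unfolding x2_def W_def using L_pos[OF i2 ae] sa by simp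
  have lo1: "x1 * ln x1 \<le> y1"
  proof -
    have "(1 + ln x1) * (x1 * (s - a)) - x1 * (s - a) \<le> y1 * (s - a)" using I1[OF x1p, of a s] sa Was by simp
    hence "(x1 * ln x1) * (s - a) \<le> y1 * (s - a)" by (simp add: algebra_simps)
    thus ?thesis using sa by simp
  qed
  have lo2: "x2 * ln x2 \<le> y2"
  proof -
    have "(1 + ln x2) * (x2 * (b - s)) - x2 * (b - s) \<le> y2 * (b - s)" using I1[OF x2p, of s b] sa Wsb by simp
    hence "(x2 * ln x2) * (b - s) \<le> y2 * (b - s)" by (simp add: algebra_simps)
    thus ?thesis using sa by simp
  qed
  have up1: "y1 + X \<le> (Q1 + 1 + ln X) * x1"
  proof -
    have "(y1 + X) * (s - a) \<le> ((Q1 + 1 + ln X) * x1) * (s - a)"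
      using s(3) Was unfolding K_def by (simp add: algebra_simps)
    thus ?thesis using sa by simp
  qed
  have up2: "y2 + X \<le> (Q1 + 1 + ln X) * x2"
  proof -
    have "W a b = W a s + W s b" "Y a b = Y a s + Y s b" using addW addY sa by auto
    hence "K b - K s = Q1 * W s b - (Y s b - (1 + ln X) * W s b + X * (b - s))"
      unfolding K_def by (simp add: algebra_simps)
    also have "\<dots> = (((Q1 + 1 + ln X) * x2) - (y2 + X)) * (b - s)" unfolding Wsb by (simp add: algebra_simps)
    finally have "0 \<le> (((Q1 + 1 + ln X) * x2) - (y2 + X)) * (b - s)" using s(4) by simp
    hence "(y2 + X) * (b - s) \<le> ((Q1 + 1 + ln X) * x2) * (b - s)" by (simp add: algebra_simps)
    thus ?thesis using sa by simp
  qed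
  have "closed_segment (x1,y1) (x2,y2) \<subseteq> Omega Q1" by (rule seg[OF x1p x2p Xp lo1 lo2 up1 up2])
  moreover have "avg a s w = x1" "avg a s (\<lambda>x. w x * ln (w x)) = y1"
      "avg s b w = x2" "avg s b (\<lambda>x. w x * ln (w x)) = y2"
    by (simp_all add: avg_def x1_def y1_def x2_def y2_def W_def Y_def)
  ultimately show ?thesis using s fe unfolding f_def e_def L_def by (intro exI[of _ s]) auto
qed


theorem lemma2:
  fixes Q Q1 :: real
  assumes "0 < Q" and "Q < Q1"
  shows "\<exists>\<delta>>0. \<forall>a b (w :: real \<Rightarrow> real).
           is_weight a b w \<and> set_integrable lborel {a..b} (\<lambda>x. w x * ln (w x)) \<and>
           rh1_char a b w < ereal Q \<longrightarrow>
           (\<exists>c. a + \<delta> * (b - a) \<le> c \<and> c \<le> b - \<delta> * (b - a) \<and>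
              closed_segment (avg a c w, avg a c (\<lambda>x. w x * ln (w x)))
                             (avg c b w, avg c b (\<lambda>x. w x * ln (w x)))
              \<subseteq> Omega Q1)"
proof -
  define \<tau> where "\<tau> = 2*Q*Q1/(Q1 - Q)"
  define \<delta> where "\<delta> = Q * exp (- \<tau>)"
  have ep: "0 < Q1 - Q" using assms by simp
  have tau1: "\<tau> * (Q1 - Q) = 2*Q*Q1" using ep by (simp add: \<tau>_def)
  have tau0: "0 < \<tau>" using assms ep by (simp add: \<tau>_def)
  have "2*Q*(Q1 - Q) < 2*Q*Q1" using assms by simp
  hence "2*Q*(Q1 - Q) < \<tau> * (Q1 - Q)" using tau1 by simp
  hence t2: "2*Q < \<tau>" using ep by simp
  have "1 + \<tau> \<le> exp \<tau>" by (rule exp_ge_add_one_self)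
  hence et: "2*Q < exp \<tau>" using t2 by linarith
  have d3: "\<delta> * exp \<tau> = Q" by (simp add: \<delta>_def exp_minus)
  have d0: "0 < \<delta>" using assms by (simp add: \<delta>_def)
  have d1: "\<delta> < 1/2"
  proof -
    have "\<delta> * (2*Q) < \<delta> * exp \<tau>" using et d0 by simp
    hence "\<delta> * (2*Q) < Q" using d3 by simp
    thus ?thesis using assms by simp
  qed
  show ?thesis
    by (intro exI[of _ \<delta>] conjI d0 allI impI main_w[OF assms tau0 tau1 d0 d1 d3]) auto
qed

end
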